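(* Let $q=2v+1$ be a prime power with $v$ odd. The maximum number of pairwise inequivalent $(\mathbb F_q^\Box,3)$ Heffter rulers equals the maximum $n$ for which there exists an $(\mathbb F_q^\Box,3;n)$ Heffter difference packing.
   Context: $\mathbb F_q^\Box$ denotes the multiplicative group of nonzero squares of $\mathbb F_q$. Fix a group isomorphism $\phi:\mathbb F_q^\Box\to\mathbb Z_v$. An $(\mathbb F_q^\Box,k;n)$ Heffter difference packing is a family of $n$ $k$-subsets $B_1,\dots,B_n$ of $\mathbb F_q^\Box$ such that: the multiset of all differences $a-b$, with $(a,b)$ an ordered pair of distinct elements of a common $\phi(B_i)$, over all $i$, has no repeated element of $\mathbb Z_v$; $k$ divides $v$ and the elements of each $\phi(B_i)$ are pairwise distinct modulo $k$; each $B_i$ sums to $0$ in $\mathbb F_q$. An $(\mathbb F_q^\Box,k)$ Heffter ruler is a $k$-subset $B$ such that $\{B\}$ is an $(\mathbb F_q^\Box,k;1)$ Heffter difference packing. Two Heffter rulers $A,B$ are equivalent if $At=B$ for some nonzero $t\in\mathbb F_q$, where $At=\{at:a\in A\}$. *)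

theory Defs
  imports Main "HOL-Library.Multiset" "HOL-Computational_Algebra.Primes" "HOL-Library.Cardinality"
begin

definition nonzero_squares :: "'a::field set" where
  "nonzero_squares = {x ^ 2 | x. x \<noteq> 0}"

text \<open>phi is a group isomorphism from the nonzero squares onto Z_v,
  Z_v being represented by the integers 0..v-1 with addition mod v.\<close>
definition sq_iso :: "('a::field \<Rightarrow> int) \<Rightarrow> nat \<Rightarrow> bool" where
  "sq_iso phi v \<longleftrightarrow>
     bij_betw phi nonzero_squares {0..<int v} \<and>
     (\<forall>x\<in>nonzero_squares. \<forall>y\<in>nonzero_squares.
        phi (x * y) = (phi x + phi y) mod int v)"

definition diff_mset :: "('a \<Rightarrow> int) \<Rightarrow> nat \<Rightarrow> 'a set \<Rightarrow> int multiset" where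
  "diff_mset phi v B =
     image_mset (\<lambda>(a, b). (a - b) mod int v)
       (mset_set {(a, b). a \<in> phi ` B \<and> b \<in> phi ` B \<and> a \<noteq> b})"

definition heffter_diff_packing ::
  "('a::field \<Rightarrow> int) \<Rightarrow> nat \<Rightarrow> nat \<Rightarrow> nat \<Rightarrow> (nat \<Rightarrow> 'a set) \<Rightarrow> bool" where
  "heffter_diff_packing phi v k n B \<longleftrightarrow>
     (\<forall>i<n. B i \<subseteq> nonzero_squares \<and> finite (B i) \<and> card (B i) = k) \<and>
     (\<forall>d. count (\<Sum>i<n. diff_mset phi v (B i)) d \<le> 1) \<and>
     k dvd v \<and>
     (\<forall>i<n. \<forall>x\<in>phi ` B i. \<forall>y\<in>phi ` B i. x \<noteq> y \<longrightarrow> x mod int k \<noteq> y mod int k) \<and>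
     (\<forall>i<n. \<Sum>(B i) = 0)"

definition heffter_ruler :: "('a::field \<Rightarrow> int) \<Rightarrow> nat \<Rightarrow> nat \<Rightarrow> 'a set \<Rightarrow> bool" where
  "heffter_ruler phi v k B \<longleftrightarrow> heffter_diff_packing phi v k 1 (\<lambda>_. B)"

definition ruler_equiv :: "'a::field set \<Rightarrow> 'a set \<Rightarrow> bool" where
  "ruler_equiv A B \<longleftrightarrow> (\<exists>t. t \<noteq> 0 \<and> (\<lambda>a. a * t) ` A = B)"

end

theory Submission
  imports Defs
begin

lemma sq_nz: "x \<in> nonzero_squares \<Longrightarrow> (x::'a::field) \<noteq> 0"
  unfolding nonzero_squares_def by auto

lemma sq_mult: "x \<in> nonzero_squares \<Longrightarrow> y \<in> nonzero_squares \<Longrightarrow> (x::'a::field) * y \<in> nonzero_squares"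
  unfolding nonzero_squares_def
proof (clarsimp)
  fix a b :: 'a assume "a \<noteq> 0" "b \<noteq> 0"
  then show "\<exists>c. a\<^sup>2 * b\<^sup>2 = c\<^sup>2 \<and> c \<noteq> 0"
    by (intro exI[of _ "a*b"]) (simp add: power_mult_distrib)
qed

lemma sq_inv: "x \<in> nonzero_squares \<Longrightarrow> inverse (x::'a::field) \<in> nonzero_squares"
  unfolding nonzero_squares_def
proof (clarsimp)
  fix a :: 'a assume "a \<noteq> 0"
  then show "\<exists>c. inverse (a\<^sup>2) = c\<^sup>2 \<and> c \<noteq> 0"
    by (intro exI[of _ "inverse a"]) (simp add: power_inverse)
qed

lemma sq_div: assumes "b \<in> nonzero_squares" "(b::'a::field) * t \<in> nonzero_squares"
  shows "t \<in> nonzero_squares"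
proof -
  have "t = inverse b * (b * t)" using sq_nz[OF assms(1)] by simp
  then show ?thesis using sq_mult[OF sq_inv[OF assms(1)] assms(2)] by metis
qed

lemma mem_diff_mset:
  assumes "finite B"
  shows "d \<in># diff_mset phi v B \<longleftrightarrow> (\<exists>a\<in>B. \<exists>b\<in>B. phi a \<noteq> phi b \<and> d = (phi a - phi b) mod int v)"
proof -
  have fin: "finite {(a, b). a \<in> phi ` B \<and> b \<in> phi ` B \<and> a \<noteq> b}"
    by (rule finite_subset[of _ "phi`B \<times> phi`B"]) (auto simp: assms)
  show ?thesis unfolding diff_mset_def using fin by auto
qed

lemma shared_equiv:
  fixes phi :: "'a::field \<Rightarrow> int"
  assumes iso: "sq_iso phi v"
   and A: "A \<subseteq> nonzero_squares" "finite A" "card A = 3" "\<Sum>A = 0"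
   and B: "B \<subseteq> nonzero_squares" "finite B" "card B = 3" "\<Sum>B = 0"
   and dA: "d \<in># diff_mset phi v A" and dB: "d \<in># diff_mset phi v B"
  shows "\<exists>t. t \<noteq> 0 \<and> (\<lambda>x. x*t) ` B = A"
proof -
  obtain a b where ab: "a\<in>A" "b\<in>A" "phi a \<noteq> phi b" "d = (phi a - phi b) mod int v"
    using dA mem_diff_mset[OF A(2)] by blast
  obtain a' b' where ab': "a'\<in>B" "b'\<in>B" "phi a' \<noteq> phi b'" "d = (phi a' - phi b') mod int v"
    using dB mem_diff_mset[OF B(2)] by blast
  have inj: "inj_on phi nonzero_squares" and rng: "\<And>x. x\<in>nonzero_squares \<Longrightarrow> phi x \<in> {0..<int v}"
    using iso unfolding sq_iso_def bij_betw_def by auto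
  have hom: "\<And>x y. x\<in>nonzero_squares \<Longrightarrow> y\<in>nonzero_squares \<Longrightarrow> phi (x*y) = (phi x + phi y) mod int v"
    using iso unfolding sq_iso_def by auto
  have aS: "a \<in> nonzero_squares" "b \<in> nonzero_squares" using ab A by auto
  have aS': "a' \<in> nonzero_squares" "b' \<in> nonzero_squares" using ab' B by auto
  define t where "t = a * inverse a'"
  have tS: "t \<in> nonzero_squares" unfolding t_def using sq_mult sq_inv aS aS' by blast
  have t0: "t \<noteq> 0" using sq_nz[OF tS] .
  have at: "a' * t = a" using sq_nz[OF aS'(1)] by (simp add: t_def)
  have h1: "phi a = (phi a' + phi t) mod int v" using hom[OF aS'(1) tS] at by simp
  have h2: "phi (b'*t) = (phi b' + phi t) mod int v" using hom[OF aS'(2) tS] .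
  have d1: "int v dvd (phi a - phi b) - (phi a' - phi b')"
    using ab(4) ab'(4) by (metis mod_eq_dvd_iff)
  have d2: "int v dvd (phi a' + phi t) - phi a"
    using h1 by (metis mod_eq_dvd_iff mod_mod_trivial)
  have "int v dvd ((phi a - phi b) - (phi a' - phi b')) + ((phi a' + phi t) - phi a)"
    using d1 d2 by (rule dvd_add)
  also have "((phi a - phi b) - (phi a' - phi b')) + ((phi a' + phi t) - phi a) = (phi b' + phi t) - phi b"
    by simp
  finally have "(phi b' + phi t) mod int v = phi b mod int v" by (metis mod_eq_dvd_iff)
  moreover have "phi b mod int v = phi b" using rng[OF aS(2)] by simp
  ultimately have "phi (b'*t) = phi b" using h2 by simp
  moreover have "b'*t \<in> nonzero_squares" using sq_mult aS' tS by blast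
  ultimately have bt: "b'*t = b" using inj aS(2) by (meson inj_on_eq_iff)
  have anb: "a \<noteq> b" using ab by auto
  have anb': "a' \<noteq> b'" using ab' by auto
  have "card (A - {a,b}) = 1" using A(2,3) ab anb by (simp add: card_Diff_subset)
  then obtain c where c: "A - {a,b} = {c}" by (meson card_1_singletonE)
  have Aeq: "A = {a,b,c}" and cn: "c \<noteq> a" "c \<noteq> b" using c ab by auto
  have "card (B - {a',b'}) = 1" using B(2,3) ab' anb' by (simp add: card_Diff_subset)
  then obtain c' where c': "B - {a',b'} = {c'}" by (meson card_1_singletonE)
  have Beq: "B = {a',b',c'}" and cn': "c' \<noteq> a'" "c' \<noteq> b'" using c' ab' by auto
  have "a + b + c = 0" using A(4) Aeq cn anb by (simp add: add.assoc)
  moreover have "a' + b' + c' = 0" using B(4) Beq cn' anb' by (simp add: add.assoc)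
  ultimately have "c' * t = c" using at bt
    by (metis add.commute add_eq_0_iff distrib_right minus_mult_left)
  then have "(\<lambda>x. x*t) ` B = A" using Beq Aeq at bt by auto
  then show ?thesis using t0 by blast
qed

lemma equiv_shared:
  fixes phi :: "'a::field \<Rightarrow> int"
  assumes iso: "sq_iso phi v"
   and A: "A \<subseteq> nonzero_squares" "finite A" "card A = 3"
   and B: "B \<subseteq> nonzero_squares" "finite B"
   and eq: "ruler_equiv A B"
  shows "\<exists>d. d \<in># diff_mset phi v A \<and> d \<in># diff_mset phi v B"
proof -
  obtain t where t: "t \<noteq> 0" "(\<lambda>x. x*t) ` A = B" using eq unfolding ruler_equiv_def by blast
  have inj: "inj_on phi nonzero_squares"
    using iso unfolding sq_iso_def bij_betw_def by auto
  have hom: "\<And>x y. x\<in>nonzero_squares \<Longrightarrow> y\<in>nonzero_squares \<Longrightarrow> phi (x*y) = (phi x + phi y) mod int v"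
    using iso unfolding sq_iso_def by auto
  obtain a b where ab: "a \<in> A" "b \<in> A" "a \<noteq> b"
    using A(3) unfolding card_3_iff by blast
  have aS: "a \<in> nonzero_squares" "b \<in> nonzero_squares" using ab A by auto
  have atB: "a*t \<in> B" "b*t \<in> B" using t ab by auto
  then have atS: "a*t \<in> nonzero_squares" "b*t \<in> nonzero_squares" using B by auto
  have tS: "t \<in> nonzero_squares" using sq_div[OF aS(1) atS(1)] .
  have pab: "phi a \<noteq> phi b" using inj aS ab(3) by (meson inj_on_eq_iff)
  have "a*t \<noteq> b*t" using t(1) ab(3) by simp
  then have pab': "phi (a*t) \<noteq> phi (b*t)" using inj atS by (meson inj_on_eq_iff)
  have e1: "phi (a*t) = (phi a + phi t) mod int v" "phi (b*t) = (phi b + phi t) mod int v"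
    using hom aS tS by auto
  have "(phi (a*t) - phi (b*t)) mod int v = ((phi a + phi t) - (phi b + phi t)) mod int v"
    unfolding e1 by (simp add: mod_diff_eq)
  then have "(phi (a*t) - phi (b*t)) mod int v = (phi a - phi b) mod int v" by simp
  then show ?thesis using mem_diff_mset[OF A(2)] mem_diff_mset[OF B(2)] ab atB pab pab' by metis
qed

lemma sum_le1:
  fixes f :: "'b \<Rightarrow> nat"
  assumes "finite I" "\<And>i. i\<in>I \<Longrightarrow> f i \<le> 1"
    "\<And>i j. i\<in>I \<Longrightarrow> j\<in>I \<Longrightarrow> i\<noteq>j \<Longrightarrow> f i = 0 \<or> f j = 0"
  shows "sum f I \<le> 1"
proof (cases "\<exists>i\<in>I. f i \<noteq> 0")
  case True
  then obtain i where i: "i\<in>I" "f i \<noteq> 0" by blast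
  have "sum f (I - {i}) = 0" using assms(1,3) i by (force intro!: sum.neutral)
  then show ?thesis using sum.remove[OF assms(1) i(1), of f] assms(2)[OF i(1)] by simp
next
  case False
  then show ?thesis by simp
qed

theorem proposition4p10:
  fixes phi :: "'a::{finite,field} \<Rightarrow> int" and v :: nat
  assumes "CARD('a) = 2 * v + 1"
    and "\<exists>p m. prime (p::nat) \<and> m > 0 \<and> CARD('a) = p ^ m"
    and "odd v"
    and "sq_iso phi v"
  shows "Sup {card R | R. (\<forall>B\<in>R. heffter_ruler phi v 3 B) \<and>
                         (\<forall>A\<in>R. \<forall>B\<in>R. A \<noteq> B \<longrightarrow> \<not> ruler_equiv A B)}
       = Sup {n. \<exists>B. heffter_diff_packing phi v 3 n B}"
proof (cases "3 dvd v")
  case False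
  have "{card R | R. (\<forall>B\<in>R. heffter_ruler phi v 3 B) \<and>
                         (\<forall>A\<in>R. \<forall>B\<in>R. A \<noteq> B \<longrightarrow> \<not> ruler_equiv A B)} = {0}"
    (is "?S = _")
  proof
    show "{0} \<subseteq> ?S" by (auto intro!: exI[of _ "{}"])
    show "?S \<subseteq> {0}" using False by (auto simp: heffter_ruler_def heffter_diff_packing_def)
  qed
  moreover have "{n. \<exists>B. heffter_diff_packing phi v 3 n B} = {}"
    using False by (auto simp: heffter_diff_packing_def)
  ultimately show ?thesis by simp
next
  case dvd3: True
  let ?D = "diff_mset phi v"
  have ruler_iff: "heffter_ruler phi v 3 B \<longleftrightarrow>
     B \<subseteq> nonzero_squares \<and> finite B \<and> card B = 3 \<and> (\<forall>d. count (?D B) d \<le> 1) \<and>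
     (\<forall>x\<in>phi ` B. \<forall>y\<in>phi ` B. x \<noteq> y \<longrightarrow> x mod 3 \<noteq> y mod 3) \<and> \<Sum>B = 0" for B
    using dvd3 unfolding heffter_ruler_def heffter_diff_packing_def by simp
  have "{card R | R. (\<forall>B\<in>R. heffter_ruler phi v 3 B) \<and>
                         (\<forall>A\<in>R. \<forall>B\<in>R. A \<noteq> B \<longrightarrow> \<not> ruler_equiv A B)}
       = {n. \<exists>B. heffter_diff_packing phi v 3 n B}"
  proof (intro equalityI subsetI)
    fix n assume "n \<in> {card R | R. (\<forall>B\<in>R. heffter_ruler phi v 3 B) \<and>
                         (\<forall>A\<in>R. \<forall>B\<in>R. A \<noteq> B \<longrightarrow> \<not> ruler_equiv A B)}"
    then obtain R where R: "n = card R" "\<forall>B\<in>R. heffter_ruler phi v 3 B"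
      "\<forall>A\<in>R. \<forall>B\<in>R. A \<noteq> B \<longrightarrow> \<not> ruler_equiv A B" by blast
    have "finite R" by simp
    then obtain h where h: "bij_betw h {0..<n} R" using R(1) ex_bij_betw_nat_finite by blast
    have hR: "\<And>i. i < n \<Longrightarrow> heffter_ruler phi v 3 (h i)" using h R(2) bij_betwE by fastforce
    have hinj: "\<And>i j. i<n \<Longrightarrow> j<n \<Longrightarrow> i \<noteq> j \<Longrightarrow> h i \<noteq> h j"
      using h unfolding bij_betw_def inj_on_def by auto
    have cnt: "count (\<Sum>i<n. ?D (h i)) d \<le> 1" for d
    proof -
      have "count (\<Sum>i<n. ?D (h i)) d = (\<Sum>i<n. count (?D (h i)) d)" by (simp add: count_sum)
      also have "\<dots> \<le> 1"
      proof (rule sum_le1)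
        show "count (?D (h i)) d \<le> 1" if "i \<in> {..<n}" for i using hR[of i] that ruler_iff by auto
        show "count (?D (h i)) d = 0 \<or> count (?D (h j)) d = 0"
          if "i \<in> {..<n}" "j \<in> {..<n}" "i \<noteq> j" for i j
        proof (rule ccontr)
          assume "\<not> ?thesis"
          then have "d \<in># ?D (h i)" "d \<in># ?D (h j)" by auto
          have ij: "i < n" "j < n" using that by auto
          obtain t where "t \<noteq> 0" "(\<lambda>x. x*t) ` h j = h i"
            using shared_equiv[OF assms(4), of "h i" "h j" d] hR[OF ij(1)] hR[OF ij(2)] ruler_iff \<open>d \<in># ?D (h i)\<close> \<open>d \<in># ?D (h j)\<close> by blast
          then have "ruler_equiv (h j) (h i)" unfolding ruler_equiv_def by blast
          moreover have "h j \<in> R" "h i \<in> R" using h that bij_betwE by fastforce+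
          ultimately show False using R(3) hinj that by auto
        qed
      qed simp
      finally show ?thesis .
    qed
    have "heffter_diff_packing phi v 3 n h"
      unfolding heffter_diff_packing_def using dvd3 cnt hR ruler_iff by auto
    then show "n \<in> {n. \<exists>B. heffter_diff_packing phi v 3 n B}" by blast
  next
    fix n assume "n \<in> {n. \<exists>B. heffter_diff_packing phi v 3 n B}"
    then obtain B where P: "heffter_diff_packing phi v 3 n B" by blast
    have blk: "\<And>i. i<n \<Longrightarrow> B i \<subseteq> nonzero_squares \<and> finite (B i) \<and> card (B i) = 3 \<and> \<Sum>(B i) = 0
       \<and> (\<forall>x\<in>phi ` B i. \<forall>y\<in>phi ` B i. x \<noteq> y \<longrightarrow> x mod 3 \<noteq> y mod 3)"
      using P unfolding heffter_diff_packing_def by simp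
    have cnt: "\<And>d. (\<Sum>i<n. count (?D (B i)) d) \<le> 1"
      using P unfolding heffter_diff_packing_def by (simp add: count_sum)
    have c1: "count (?D (B i)) d \<le> 1" if "i<n" for i d
      using cnt[of d] member_le_sum[of i "{..<n}" "\<lambda>i. count (?D (B i)) d"] that by simp
    have noeq: "\<not> ruler_equiv (B i) (B j)" if ij: "i<n" "j<n" "i\<noteq>j" for i j
    proof
      assume "ruler_equiv (B i) (B j)"
      moreover have "B i \<subseteq> nonzero_squares" "finite (B i)" "card (B i) = 3"
        "B j \<subseteq> nonzero_squares" "finite (B j)" using blk[OF ij(1)] blk[OF ij(2)] by auto
      ultimately obtain d where d: "d \<in># ?D (B i)" "d \<in># ?D (B j)"
        using equiv_shared[OF assms(4), of "B i" "B j"] by metis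
      have "(\<Sum>k\<in>{i,j}. count (?D (B k)) d) \<le> (\<Sum>k<n. count (?D (B k)) d)"
        by (rule sum_mono2) (use ij in auto)
      moreover have "(\<Sum>k\<in>{i,j}. count (?D (B k)) d) = count (?D (B i)) d + count (?D (B j)) d"
        using ij(3) by simp
      moreover have "count (?D (B i)) d \<ge> 1" "count (?D (B j)) d \<ge> 1" using d by auto
      ultimately show False using cnt[of d] by linarith
    qed
    have "B i \<noteq> B j" if "i<n" "j<n" "i\<noteq>j" for i j
    proof
      assume "B i = B j"
      then have "ruler_equiv (B i) (B j)" unfolding ruler_equiv_def by (intro exI[of _ 1]) simp
      then show False using noeq that by blast
    qed
    then have inj: "inj_on B {..<n}" unfolding inj_on_def by blast
    have "card (B ` {..<n}) = n" using card_image[OF inj] by simp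
    moreover have "\<forall>X\<in>B ` {..<n}. heffter_ruler phi v 3 X"
    proof
      fix X assume "X \<in> B ` {..<n}"
      then obtain i where i: "i < n" "X = B i" by auto
      show "heffter_ruler phi v 3 X" unfolding ruler_iff using blk[OF i(1)] c1[OF i(1)] i(2) by blast
    qed
    moreover have "\<forall>X\<in>B ` {..<n}. \<forall>Y\<in>B ` {..<n}. X \<noteq> Y \<longrightarrow> \<not> ruler_equiv X Y"
    proof (intro ballI impI)
      fix X Y assume "X \<in> B ` {..<n}" "Y \<in> B ` {..<n}" "X \<noteq> Y"
      then obtain i j where "i < n" "j < n" "X = B i" "Y = B j" "i \<noteq> j" by auto
      then show "\<not> ruler_equiv X Y" using noeq by blast
    qed
    ultimately have "\<exists>R. n = card R \<and> (\<forall>B\<in>R. heffter_ruler phi v 3 B) \<and>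
                         (\<forall>A\<in>R. \<forall>B\<in>R. A \<noteq> B \<longrightarrow> \<not> ruler_equiv A B)"
      by (intro exI[of _ "B ` {..<n}"]) simp
    then show "n \<in> {card R | R. (\<forall>B\<in>R. heffter_ruler phi v 3 B) \<and>
                         (\<forall>A\<in>R. \<forall>B\<in>R. A \<noteq> B \<longrightarrow> \<not> ruler_equiv A B)}" by simp
  qed
  then show ?thesis by simp
qed

end
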